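(* Let $\alpha>2$, $P>0$ and $N\ge 0$. Let $V'$ be a finite set of points (nodes) in the Euclidean plane and let $v$ be a point with $v\notin V'$. Suppose that there are reals $\rho_1,\rho_2$ such that (1) any two distinct nodes of $V'$ are at Euclidean distance at least $\rho_1$ from each other, (2) every node of $V'$ is at distance at least $\rho_2$ from $v$, and (3) $\rho_2 > \rho_1/2 > 0$. Then $$SP(V',v) \;<\; \frac{36(\alpha-1)}{\alpha-2}\,\frac{\rho_2^2}{\rho_1^2}\,\frac{P}{\rho_2^{\alpha}} + N .$$
   Context: Physical (SINR) model in the Euclidean plane: every transmitting node uses the same power $P$, the path-loss exponent is $\alpha>2$, and $N\ge 0$ is the background noise. For a set $V'$ of nodes that transmit simultaneously and a node $v\notin V'$, the sensed power strength at $v$ is $SP(V',v)=\sum_{u\in V'} \frac{P}{d(u,v)^{\alpha}} + N$, where $d(u,v)$ is the Euclidean distance between $u$ and $v$. *)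

theory Defs
  imports "HOL-Analysis.Analysis"
begin

text \<open>Sensed power strength at v from the simultaneously transmitting set V'
  (SINR model, uniform power P, path-loss exponent alpha, noise N).\<close>
definition SP :: "real \<Rightarrow> real \<Rightarrow> real \<Rightarrow> (real^2) set \<Rightarrow> real^2 \<Rightarrow> real" where
  "SP P alpha N V' v = (\<Sum>u\<in>V'. P / dist u v powr alpha) + N"

end

theory Submission
  imports Defs
begin

lemma mball: "r \<ge> 0 \<Longrightarrow> measure lborel (ball (c::real^2) r) = unit_ball_vol 2 * r^2"
  using content_ball[of r c] by simp
lemma mcball: "r \<ge> 0 \<Longrightarrow> measure lborel (cball (c::real^2) r) = unit_ball_vol 2 * r^2"
  using content_cball[of r c] by simp

lemma eball: "r \<ge> 0 \<Longrightarrow> emeasure lborel (ball (c::real^2) r) \<noteq> \<infinity>"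
  using emeasure_ball[of r c] by simp

lemma packing:
  fixes S :: "(real^2) set" and v :: "real^2"
  assumes fin: "finite S" and s: "s > 0"
    and sep: "\<forall>u\<in>S. \<forall>w\<in>S. u \<noteq> w \<longrightarrow> dist u w \<ge> s"
    and ann: "\<forall>u\<in>S. a \<le> dist u v \<and> dist u v < b"
    and a: "a \<ge> s/2" and ab: "a \<le> b"
  shows "real (card S) * (s/2)^2 \<le> (b + s/2)^2 - (a - s/2)^2"
proof -
  define V where "V = unit_ball_vol 2"
  have V: "V > 0" unfolding V_def by simp
  define A where "A = ball v (b + s/2) - cball v (a - s/2)"
  have disj: "disjoint_family_on (\<lambda>u. ball u (s/2)) S"
    unfolding disjoint_family_on_def
  proof (intro ballI impI)
    fix u w assume "u \<in> S" "w \<in> S" "u \<noteq> w"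
    with sep have d: "dist u w \<ge> s" by auto
    show "ball u (s/2) \<inter> ball w (s/2) = {}"
    proof (rule ccontr)
      assume "ball u (s/2) \<inter> ball w (s/2) \<noteq> {}"
      then obtain z where "dist u z < s/2" "dist w z < s/2" by auto
      hence "dist u w < s" using dist_triangle2[of u w z] by linarith
      with d show False by simp
    qed
  qed
  have sub: "(\<Union>u\<in>S. ball u (s/2)) \<subseteq> A"
  proof
    fix z assume "z \<in> (\<Union>u\<in>S. ball u (s/2))"
    then obtain u where u: "u \<in> S" "dist u z < s/2" by auto
    with ann have "a \<le> dist u v" "dist u v < b" by auto
    moreover have "dist u v \<le> dist u z + dist z v" by (rule dist_triangle)
    moreover have "dist z v \<le> dist z u + dist u v" by (rule dist_triangle)
    ultimately show "z \<in> A" using u(2) unfolding A_def by (auto simp: dist_commute)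
  qed
  have "measure lborel (\<Union>u\<in>S. ball u (s/2)) = (\<Sum>u\<in>S. measure lborel (ball u (s/2)))"
    using fin disj eball[of "s/2"] s by (intro measure_finite_Union) auto
  also have "\<dots> = real (card S) * (V * (s/2)^2)" using s by (simp add: mball V_def)
  finally have e1: "measure lborel (\<Union>u\<in>S. ball u (s/2)) = real (card S) * (V * (s/2)^2)" .
  have "measure lborel A = measure lborel (ball v (b + s/2)) - measure lborel (cball v (a - s/2))"
    unfolding A_def using a ab s eball[of "b + s/2" v]
    by (intro measure_Diff) auto
  also have "\<dots> = V * ((b + s/2)^2 - (a - s/2)^2)" using a ab s
    by (simp add: mball mcball V_def algebra_simps)
  finally have e2: "measure lborel A = V * ((b + s/2)^2 - (a - s/2)^2)" .
  have "measure lborel (\<Union>u\<in>S. ball u (s/2)) \<le> measure lborel A"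
  proof (rule measure_mono_fmeasurable[OF sub])
    show "(\<Union>u\<in>S. ball u (s/2)) \<in> sets lborel" using fin by (intro sets.finite_UN) auto
    have "emeasure lborel A \<le> emeasure lborel (ball v (b + s/2))"
      unfolding A_def by (intro emeasure_mono) auto
    also have "\<dots> < \<infinity>" using eball[of "b + s/2" v] a ab s by (simp add: top.not_eq_extremum)
    finally show "A \<in> fmeasurable lborel" unfolding fmeasurable_def A_def by auto
  qed
  with e1 e2 have "V * (real (card S) * (s/2)^2) \<le> V * ((b + s/2)^2 - (a - s/2)^2)"
    by (simp add: algebra_simps)
  with V show ?thesis by simp
qed

lemma key_ineq:
  fixes t :: real assumes t: "t > 0"
  shows "12/(1 - 2 powr (-t)) + 24/(1 - 2 powr (-t)/2) < 36*(t+1)/t"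
proof -
  define y where "y = 2 powr (-t)"
  define u where "u = t * ln 2"
  have u: "u \<ge> 2*t/3" unfolding u_def using ln2_ge_two_thirds t by (simp add: mult_left_mono)
  have upos: "u > 0" using u t by linarith
  have "2 powr t = exp u" unfolding u_def powr_def by (simp add: mult.commute)
  also have "\<dots> \<ge> 1 + u" by (rule exp_ge_add_one_self)
  finally have e: "2 powr t \<ge> 1 + u" .
  have y: "y = 1 / 2 powr t" unfolding y_def by (simp add: powr_minus divide_inverse)
  have ypos: "y > 0" unfolding y_def by simp
  have "y * (1 + u) \<le> y * 2 powr t" using e ypos by (intro mult_left_mono) auto
  hence y1: "y * (1 + u) \<le> 1" using y by simp
  hence ylt: "y < 1" using upos ypos by (smt (verit) mult_less_cancel_left1)
  have h1: "12/(1-y) = 12 + 12*y/(1-y)" using ylt by (simp add: field_simps)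
  have h2: "24/(1-y/2) = 24 + 12*y/(1-y/2)" using ylt by (simp add: field_simps)
  have h3: "12*y/(1-y/2) < 12*y/(1-y)" using ylt ypos by (intro divide_strict_left_mono) auto
  have h4: "y/(1-y) \<le> 1/u" using y1 ylt upos by (simp add: field_simps)
  have h5: "1/u \<le> 3/(2*t)" using u t upos by (simp add: field_simps)
  have "12/(1-y) + 24/(1-y/2) < 36 + 24*(y/(1-y))" using h1 h2 h3 by simp
  also have "\<dots> \<le> 36 + 24*(3/(2*t))" using h4 h5 by simp
  also have "\<dots> = 36*(t+1)/t" using t by (simp add: field_simps)
  finally show ?thesis unfolding y_def .
qed

lemma geo_le:
  fixes z :: real assumes "0 \<le> z" "z < 1"
  shows "(\<Sum>k<M. z^k) \<le> 1/(1-z)"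
proof -
  have "(\<Sum>k<M. z^k) = (1 - z^M)/(1-z)" using assms by (simp add: sum_gp_strict)
  also have "\<dots> \<le> 1/(1-z)" using assms by (intro divide_right_mono) auto
  finally show ?thesis .
qed


theorem mainTheorem1:
  fixes alpha P N rho1 rho2 :: real and V' :: "(real^2) set" and v :: "real^2"
  assumes "alpha > 2" and "P > 0" and "N \<ge> 0"
    and "finite V'" and "v \<notin> V'"
    and "\<forall>u\<in>V'. \<forall>w\<in>V'. u \<noteq> w \<longrightarrow> dist u w \<ge> rho1"
    and "\<forall>u\<in>V'. dist u v \<ge> rho2"
    and "rho2 > rho1 / 2" and "rho1 / 2 > 0"
  shows "SP P alpha N V' v
           < 36 * (alpha - 1) / (alpha - 2) * (rho2^2 / rho1^2) * (P / rho2 powr alpha) + N"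
proof -
  note A = assms
  define s where "s = rho1"
  define r where "r = rho2"
  have s: "s > 0" and r: "r > 0" and rs: "r > s/2" using A unfolding s_def r_def by auto
  define x where "x = r / s"
  have x: "x > 1/2" unfolding x_def using s rs by (simp add: field_simps)
  define c where "c = P / r powr alpha"
  have c: "c > 0" unfolding c_def using A r by simp
  define q where "q = 1 / 2 powr alpha"
  have q: "q > 0" unfolding q_def by simp
  define d where "d u = dist u v" for u
  define k where "k u = nat \<lfloor>log 2 (d u / r)\<rfloor>" for u
  have kb: "r * 2^k u \<le> d u \<and> d u < r * 2^(Suc (k u))" if u: "u \<in> V'" for u
  proof -
    have dr: "d u \<ge> r" using A u unfolding d_def r_def by auto
    define L where "L = log 2 (d u / r)"
    have L0: "L \<ge> 0" unfolding L_def using dr r by simp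
    have kL: "real (k u) = of_int \<lfloor>L\<rfloor>" unfolding k_def L_def[symmetric] using L0 by simp
    have pL: "2 powr L = d u / r" unfolding L_def using dr r by simp
    have "2 ^ k u = 2 powr real (k u)" by (simp add: powr_realpow)
    also have "\<dots> \<le> 2 powr L" using kL by simp
    finally have 1: "2 ^ k u \<le> d u / r" using pL by simp
    have "d u / r = 2 powr L" using pL by simp
    also have "\<dots> < 2 powr (real (Suc (k u)))" using kL by (intro powr_less_mono) linarith+
    also have "\<dots> = 2 ^ Suc (k u)" by (rule powr_realpow) simp
    finally have 2: "d u / r < 2 ^ Suc (k u)" .
    show ?thesis using 1 2 r by (simp add: field_simps)
  qed
  have termb: "P / d u powr alpha \<le> c * q ^ k u" if u: "u \<in> V'" for u
  proof -
    have "(r * 2^k u) powr alpha \<le> d u powr alpha"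
      using kb[OF u] r A by (intro powr_mono2) auto
    moreover have "(r * 2^k u) powr alpha = r powr alpha * (2 powr alpha)^k u"
      using r by (simp add: powr_mult powr_realpow[symmetric] powr_powr mult.commute flip: powr_realpow)
    ultimately have le: "r powr alpha * (2 powr alpha)^k u \<le> d u powr alpha" by simp
    have pos: "r powr alpha * (2 powr alpha)^k u > 0" using r by simp
    have "P / d u powr alpha \<le> P / (r powr alpha * (2 powr alpha)^k u)"
      using le pos A by (intro divide_left_mono mult_pos_pos) auto
    also have "\<dots> = c * q ^ k u" unfolding c_def q_def by (simp add: power_one_over)
    finally show ?thesis .
  qed
  have card: "real (card {u\<in>V'. k u = j}) \<le> (12 * 4^j + 24 * 2^j) * x^2" for j
  proof -
    have "real (card {u\<in>V'. k u = j}) * (s/2)^2 \<le> (r*2^Suc j + s/2)^2 - (r*2^j - s/2)^2"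
    proof (rule packing)
      show "finite {u\<in>V'. k u = j}" using A by simp
      show "\<forall>u\<in>{u\<in>V'. k u = j}. \<forall>w\<in>{u\<in>V'. k u = j}. u \<noteq> w \<longrightarrow> dist u w \<ge> s"
        using A unfolding s_def by auto
      show "\<forall>u\<in>{u\<in>V'. k u = j}. r*2^j \<le> dist u v \<and> dist u v < r*2^Suc j"
        using kb unfolding d_def by auto
      have "r * 1 \<le> r * 2^j" using r by (intro mult_left_mono) auto
      thus "r*2^j \<ge> s/2" using rs by simp
      show "r*2^j \<le> r*2^Suc j" using r by simp
    qed (use s in auto)
    also have "\<dots> = 3 * 4^j * r^2 + 3 * 2^j * r * s"
      using power_mult_distrib[of "2::real" 2 j]
      by (simp add: power2_eq_square algebra_simps power_mult_distrib flip: power_mult)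
    finally have e: "real (card {u\<in>V'. k u = j}) * s^2 \<le> 12 * 4^j * r^2 + 12 * 2^j * r * s"
      by (simp add: power_divide)
    have "real (card {u\<in>V'. k u = j}) \<le> 12 * 4^j * x^2 + 12 * 2^j * x"
      using e s unfolding x_def by (simp add: field_simps power2_eq_square)
    also have "12 * 2^j * x \<le> 24 * 2^j * x^2"
      using x by (simp add: power2_eq_square)
    finally show ?thesis by (simp add: algebra_simps)
  qed
  have q4e: "4 * q = 2 powr (-(alpha - 2))"
  proof -
    have "2 powr (-(alpha - 2)) = 2 powr (2 - alpha)" by simp
    also have "\<dots> = 2 powr 2 / 2 powr alpha" by (rule powr_diff)
    finally show ?thesis unfolding q_def by simp
  qed
  have q4: "4 * q < 1"
  proof -
    have "2 powr (-(alpha - 2)) < 2 powr 0" using A by (intro powr_less_mono) auto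
    thus ?thesis using q4e by simp
  qed
  obtain M where M: "k ` V' \<subseteq> {..<M}"
    using finite_nat_iff_bounded A(4) by (metis finite_imageI)
  have "(\<Sum>u\<in>V'. P / dist u v powr alpha) \<le> (\<Sum>u\<in>V'. c * q ^ k u)"
    using termb unfolding d_def by (intro sum_mono) auto
  also have "\<dots> = (\<Sum>j\<in>k ` V'. (\<Sum>u\<in>{u\<in>V'. k u = j}. c * q ^ k u))"
    using A(4) by (rule sum.image_gen)
  also have "\<dots> = (\<Sum>j\<in>k ` V'. real (card {u\<in>V'. k u = j}) * (c * q ^ j))"
    by (intro sum.cong refl) simp
  also have "\<dots> \<le> (\<Sum>j\<in>k ` V'. (12 * 4^j + 24 * 2^j) * x^2 * (c * q ^ j))"
    using card c q by (intro sum_mono mult_right_mono) auto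
  also have "\<dots> \<le> (\<Sum>j<M. (12 * 4^j + 24 * 2^j) * x^2 * (c * q ^ j))"
    using M c q by (intro sum_mono2) auto
  also have "\<dots> = x^2 * c * (12 * (\<Sum>j<M. (4*q)^j) + 24 * (\<Sum>j<M. (2*q)^j))"
    by (simp add: sum_distrib_left sum.distrib algebra_simps power_mult_distrib)
  also have "\<dots> \<le> x^2 * c * (12 / (1 - 4*q) + 24 / (1 - 2*q))"
  proof -
    have "(\<Sum>j<M. (4*q)^j) \<le> 1/(1-4*q)" using q q4 by (intro geo_le) auto
    moreover have "(\<Sum>j<M. (2*q)^j) \<le> 1/(1-2*q)" using q q4 by (intro geo_le) auto
    ultimately show ?thesis using c by (intro mult_left_mono) auto
  qed
  also have "\<dots> < x^2 * c * (36 * (alpha - 1) / (alpha - 2))"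
  proof -
    have "4 * q = 2 powr (-(alpha - 2))" by (rule q4e)
    moreover have "2 * q = 2 powr (-(alpha - 2)) / 2" using q4e by simp
    ultimately have "12 / (1 - 4*q) + 24 / (1 - 2*q) = 12/(1 - 2 powr (-(alpha - 2))) + 24/(1 - 2 powr (-(alpha - 2))/2)"
      by (simp only:)
    also have "\<dots> < 36 * ((alpha - 2) + 1) / (alpha - 2)" using key_ineq[of "alpha - 2"] A by simp
    also have "(alpha - 2) + 1 = alpha - 1" by simp
    finally have "12 / (1 - 4*q) + 24 / (1 - 2*q) < 36 * (alpha - 1) / (alpha - 2)" .
    moreover have "x^2 * c > 0" using c x by simp
    ultimately show ?thesis by (simp only: mult_less_cancel_left_pos)
  qed
  finally have F: "(\<Sum>u\<in>V'. P / dist u v powr alpha) < x^2 * c * (36 * (alpha - 1) / (alpha - 2))" .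
  have "x^2 * c * (36 * (alpha - 1) / (alpha - 2)) = 36 * (alpha - 1) / (alpha - 2) * (rho2^2 / rho1^2) * (P / rho2 powr alpha)"
    unfolding x_def c_def r_def s_def by (simp add: power_divide mult_ac)
  with F show ?thesis unfolding SP_def by simp
qed
end
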